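(* $\frac{\partial^2}{\partial y^2}\zeta(3,z)\ge 4>0$ for all $z=x+iy$ with $x\in\mathbb{R}$ and $y\in[\frac{\sqrt3}{2},\infty)$.
   Context: For $s>1$ and $z=x+iy$ with $y>0$, $\zeta(s,z)=\sum_{(m,n)\in\mathbb{Z}^2\setminus\{0\}}\frac{y^s}{|mz+n|^{2s}}$. *)

theory Defs
  imports "HOL-Analysis.Analysis"
begin

text \<open>The series converges absolutely for s > 1, so the unordered sum infsum is the sum.\<close>
definition epstein_zeta :: "real \<Rightarrow> complex \<Rightarrow> real" where
  "epstein_zeta s z =
     (\<Sum>\<^sub>\<infinity>(m,n)\<in>(UNIV :: (int \<times> int) set) - {(0,0)}.
        (Im z) powr s / (cmod (of_int m * z + of_int n)) powr (2 * s))"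

end

theory Submission
  imports Defs
begin


lemma real_summable_by_bound:
  fixes h :: "'k \<Rightarrow> real"
  assumes "M summable_on U" "\<And>k. k \<in> U \<Longrightarrow> \<bar>h k\<bar> \<le> M k"
  shows "h summable_on U"
proof -
  have "(\<lambda>k. norm (h k)) summable_on U"
    by (rule summable_on_comparison_test[OF assms(1)]) (use assms(2) in auto)
  then show ?thesis by (rule abs_summable_summable)
qed

lemma hnat_summable: "summable (\<lambda>n::nat. 1 / (1 + (real n)^2))"
proof (rule summable_comparison_test'[OF inverse_power_summable[of 2, where 'a=real]])
  fix n :: nat assume "n \<ge> 1"
  have "1 + (real n)^2 > 0" by (simp add: add_pos_nonneg)
  then show "norm (1 / (1 + (real n)^2)) \<le> inverse (real n ^ 2)"
    using \<open>n \<ge> 1\<close> by (simp add: divide_simps)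
qed simp

lemma sq_neg: "(- 1 - (r::real))^2 = (1 + r)^2"
  by (simp add: power2_eq_square algebra_simps)

lemma hint_summable: "(\<lambda>k::int. 1 / (1 + (real_of_int k)^2)) summable_on UNIV"
proof -
  let ?h = "\<lambda>k::int. 1 / (1 + (real_of_int k)^2)"
  have hn: "(\<lambda>n::nat. 1 / (1 + (real n)^2)) summable_on UNIV"
    using sums_nonneg_imp_has_sum[OF summable_sums[OF hnat_summable]] summable_on_def
    by (metis (no_types, lifting) divide_nonneg_nonneg zero_le_one add_nonneg_nonneg zero_le_power2)
  have "(\<lambda>n::nat. 1 / (1 + (real (Suc n))^2)) summable_on UNIV"
  proof -
    have "summable (\<lambda>n::nat. 1 / (1 + (real (Suc n))^2))"
      using hnat_summable summable_Suc_iff[of "\<lambda>n::nat. 1 / (1 + (real n)^2)"] by simp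
    then show ?thesis
      using sums_nonneg_imp_has_sum[OF summable_sums] summable_on_def
      by (metis (no_types, lifting) divide_nonneg_nonneg zero_le_one add_nonneg_nonneg zero_le_power2)
  qed
  have A: "?h summable_on (int ` UNIV)"
    using hn by (subst summable_on_reindex) (auto simp: o_def inj_on_def)
  have B: "?h summable_on ((\<lambda>n. - int (Suc n)) ` UNIV)"
    using \<open>(\<lambda>n::nat. 1 / (1 + (real (Suc n))^2)) summable_on UNIV\<close>
    by (subst summable_on_reindex) (auto simp: o_def inj_on_def sq_neg)
  have "?h summable_on (int ` UNIV \<union> (\<lambda>n. - int (Suc n)) ` UNIV)"
    by (rule summable_on_Un_disjoint[OF A B]) auto
  moreover have "int ` UNIV \<union> (\<lambda>n. - int (Suc n)) ` UNIV = (UNIV :: int set)"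
  proof -
    have "k \<in> int ` UNIV \<union> (\<lambda>n. - int (Suc n)) ` UNIV" for k :: int
    proof (cases "k \<ge> 0")
      case True then show ?thesis by (metis UnI1 nonneg_int_cases rangeI)
    next
      case False
      then have "k = - int (Suc (nat (- k - 1)))" by simp
      then show ?thesis by (metis UnI2 rangeI)
    qed
    then show ?thesis by auto
  qed
  ultimately show ?thesis by simp
qed

lemma hprod_summable:
  "(\<lambda>(m::int, n::int). 1 / (1 + (real_of_int m)^2) * (1 / (1 + (real_of_int n)^2))) summable_on UNIV"
proof -
  let ?h = "\<lambda>k::int. 1 / (1 + (real_of_int k)^2)"
  define H where "H = infsum ?h UNIV"
  have "(?h has_sum H) UNIV" unfolding H_def using hint_summable by simp
  then have inner: "((\<lambda>n. ?h m * ?h n) has_sum (?h m * H)) UNIV" for m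
    by (rule has_sum_cmult_right)
  have outer: "(\<lambda>m. ?h m * H) summable_on UNIV"
    by (rule summable_on_cmult_left[OF hint_summable])
  have "(\<lambda>p. ?h (fst p) * ?h (snd p)) summable_on Sigma UNIV (\<lambda>_. UNIV)"
    by (rule summable_on_SigmaI[where g="\<lambda>m. ?h m * H"]) (use inner outer in auto)
  moreover have "(\<lambda>(m::int, n::int). ?h m * ?h n) = (\<lambda>p. ?h (fst p) * ?h (snd p))" by auto
  ultimately show ?thesis by simp
qed

lemma maj_summable:
  fixes x a :: real
  assumes a: "a > 0"
  shows "(\<lambda>(m::int, n::int). 1 / ((of_int m * x + of_int n)^2 + (of_int m)^2 * a^2)^3)
           summable_on (UNIV - {(0,0)})"
proof -
  define \<delta> where "\<delta> = min 1 (a^2) / (2 + 2 * x^2)"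
  have \<delta>pos: "\<delta> > 0" unfolding \<delta>_def using a by (auto intro!: divide_pos_pos add_pos_nonneg)
  have key: "1 / ((of_int m * x + of_int n)^2 + (of_int m)^2 * a^2)^3
      \<le> (4 / \<delta>^3) * (1 / (1 + (real_of_int m)^2) * (1 / (1 + (real_of_int n)^2)))"
    if mn: "(m, n) \<noteq> (0::int, 0::int)" for m n
  proof -
    define M where "M = real_of_int m" define N where "N = real_of_int n"
    define s where "s = M^2 + N^2"
    have s1: "s \<ge> 1"
    proof -
      have "m \<noteq> 0 \<or> n \<noteq> 0" using mn by auto
      then have "M^2 \<ge> 1 \<or> N^2 \<ge> 1" unfolding M_def N_def
        by (metis of_int_1_le_iff of_int_power zero_less_power2 int_one_le_iff_zero_less)
      then show ?thesis unfolding s_def by (smt (verit) zero_le_power2)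
    qed
    have q1: "(M * x + N)^2 + M^2 * a^2 \<ge> min 1 (a^2) * ((M * x + N)^2 + M^2)"
    proof -
      have "min 1 (a^2) * (M * x + N)^2 \<le> (M * x + N)^2"
        by (simp add: mult_left_le_one_le min_le_iff_disj)
      moreover have "min 1 (a^2) * M^2 \<le> M^2 * a^2"
        using mult_left_mono[OF min.cobounded2[of 1 "a^2"], of "M^2"] by (simp only: mult.commute[of "M^2"] zero_le_power2)
      ultimately show ?thesis by (simp add: distrib_left)
    qed
    have q2: "(M * x + N)^2 + M^2 \<ge> s / (2 + 2 * x^2)"
    proof -
      have "N^2 \<le> 2 * (M * x + N)^2 + 2 * M^2 * x^2"
        using sum_squares_ge_zero[of "M*x + N + M * x" 0] by (simp add: power2_eq_square algebra_simps)
      moreover have "(2 + 2 * x^2) * ((M * x + N)^2 + M^2) = 2 * (M * x + N)^2 + 2 * M^2 + 2 * (x^2 * (M * x + N)^2) + 2 * M^2 * x^2"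
        by (simp add: algebra_simps)
      moreover have "0 \<le> x^2 * (M * x + N)^2" by simp
      moreover have "0 \<le> M^2" by simp
      ultimately have "s \<le> (2 + 2 * x^2) * ((M * x + N)^2 + M^2)"
        unfolding s_def by linarith
      then show ?thesis by (simp add: divide_le_eq add_pos_nonneg mult.commute)
    qed
    have qge: "(M * x + N)^2 + M^2 * a^2 \<ge> \<delta> * s"
    proof -
      have "\<delta> * s = min 1 (a^2) * (s / (2 + 2 * x^2))" unfolding \<delta>_def by simp
      also have "\<dots> \<le> min 1 (a^2) * ((M * x + N)^2 + M^2)"
        using q2 a by (intro mult_left_mono) auto
      finally show ?thesis using q1 by linarith
    qed
    have ds: "\<delta> * s > 0" using \<delta>pos s1 by simp
    have "1 / ((M * x + N)^2 + M^2 * a^2)^3 \<le> 1 / (\<delta> * s)^3"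
      using qge ds by (intro divide_left_mono power_mono mult_pos_pos) auto
    also have "\<dots> = (1 / \<delta>^3) * (1 / s^3)" by (simp add: power_mult_distrib)
    also have "1 / s^3 \<le> 4 * (1 / (1 + M^2) * (1 / (1 + N^2)))"
    proof -
      have ee: "(1 + s)^2 = (1 + M^2) * (1 + N^2) + (M^2 + N^2 + M^2 * N^2 + (M^2)^2 + (N^2)^2)"
        unfolding s_def by algebra
      have "0 \<le> M^2 + N^2 + M^2 * N^2 + (M^2)^2 + (N^2)^2" by simp
      then have "(1 + M^2) * (1 + N^2) \<le> (1 + s)^2" using ee by linarith
      also have "\<dots> \<le> (2 * s)^2" using s1 by (intro power_mono) auto
      also have "\<dots> = 4 * s^2" by (simp add: power2_eq_square)
      also have "\<dots> \<le> 4 * s^3" using s1 by (simp add: power2_eq_square power3_eq_cube)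
      finally have "(1 + M^2) * (1 + N^2) \<le> 4 * s^3" .
      then show ?thesis using s1 by (simp add: divide_simps add_pos_nonneg)
    qed
    finally show ?thesis unfolding M_def N_def using \<delta>pos
      by (simp add: divide_simps mult_ac)
  qed
  have key2: "(case p of (m::int, n::int) \<Rightarrow> 1 / ((of_int m * x + of_int n)^2 + (of_int m)^2 * a^2)^3)
     \<le> (4 / \<delta>^3) * (case p of (m,n) \<Rightarrow> 1 / (1 + (real_of_int m)^2) * (1 / (1 + (real_of_int n)^2)))"
    if "p \<in> UNIV - {(0,0)}" for p
    using key[of "fst p" "snd p"] that by (cases p) simp
  have "(\<lambda>p. (4 / \<delta>^3) * (case p of (m,n) \<Rightarrow> 1 / (1 + (real_of_int m)^2) * (1 / (1 + (real_of_int n)^2))))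
          summable_on (UNIV - {(0,0)})"
    by (rule summable_on_cmult_right[OF summable_on_subset_banach[OF hprod_summable]]) auto
  then show ?thesis
    by (rule summable_on_comparison_test) (use key2 in auto)
qed

lemma infsum_has_deriv:
  fixes f f' :: "'k \<Rightarrow> real \<Rightarrow> real" and U :: "'k set"
  assumes U: "countable U" "infinite U"
    and S: "open S" "convex S" "t \<in> S"
    and D: "\<And>k s. k \<in> U \<Longrightarrow> s \<in> S \<Longrightarrow> (f k has_real_derivative f' k s) (at s)"
    and B0: "\<And>k s. k \<in> U \<Longrightarrow> s \<in> S \<Longrightarrow> \<bar>f k s\<bar> \<le> M k"
    and B1: "\<And>k s. k \<in> U \<Longrightarrow> s \<in> S \<Longrightarrow> \<bar>f' k s\<bar> \<le> M k"
    and M: "M summable_on U"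
  shows "((\<lambda>s. infsum (\<lambda>k. f k s) U) has_real_derivative infsum (\<lambda>k. f' k t) U) (at t)"
proof -
  define e where "e = from_nat_into U"
  have bij: "bij_betw e UNIV U" unfolding e_def by (rule bij_betw_from_nat_into[OF U])
  have eU: "e i \<in> U" for i using bij by (auto simp: bij_betw_def)
  have "(\<lambda>i. M (e i)) summable_on UNIV"
    using summable_on_reindex_bij_betw[OF bij] M by blast
  hence Me: "summable (\<lambda>i. M (e i))" by (rule summable_on_imp_summable)
  have conv: "infsum (\<lambda>k. h k s) U = (\<Sum>i. h (e i) s)"
    if hb: "\<And>k. k\<in>U \<Longrightarrow> \<bar>h k s\<bar> \<le> M k" for h :: "'k \<Rightarrow> real \<Rightarrow> real" and s
  proof -
    have "(\<lambda>k. h k s) summable_on U" by (rule real_summable_by_bound[OF M hb])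
    hence "(\<lambda>i. h (e i) s) summable_on UNIV"
      using summable_on_reindex_bij_betw[OF bij, of "\<lambda>k. h k s"] by blast
    hence "((\<lambda>i. h (e i) s) has_sum infsum (\<lambda>i. h (e i) s) UNIV) UNIV" by simp
    hence "(\<lambda>i. h (e i) s) sums infsum (\<lambda>i. h (e i) s) UNIV" by (rule has_sum_imp_sums)
    hence "(\<Sum>i. h (e i) s) = infsum (\<lambda>i. h (e i) s) UNIV" by (simp add: sums_iff)
    also have "\<dots> = infsum (\<lambda>k. h k s) U" by (rule infsum_reindex_bij_betw[OF bij])
    finally show ?thesis by simp
  qed
  have uc: "uniformly_convergent_on S (\<lambda>n x. \<Sum>i<n. f' (e i) x)"
    by (rule Weierstrass_m_test'_ev[OF always_eventually Me]) (use B1 eU in auto)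
  have sm: "summable (\<lambda>n. f (e n) t)"
    by (rule summable_comparison_test'[OF Me]) (use B0 eU S(3) in auto)
  have tI: "t \<in> interior S" using interior_open[OF S(1)] S(3) by simp
  have Dw: "\<And>n x. x \<in> S \<Longrightarrow> (f (e n) has_field_derivative f' (e n) x) (at x within S)"
    using D eU by (blast intro: has_field_derivative_at_within)
  have "((\<lambda>x. \<Sum>n. f (e n) x) has_field_derivative (\<Sum>n. f' (e n) t)) (at t)"
    by (rule has_field_derivative_series'(2)[OF S(2) Dw uc S(3) sm tI])
  moreover have "eventually (\<lambda>s. (\<Sum>n. f (e n) s) = infsum (\<lambda>k. f k s) U) (nhds t)"
    using eventually_nhds_in_open[OF S(1,3)]
    by (rule eventually_mono) (use conv[of f] B0 in auto)
  moreover have "(\<Sum>n. f' (e n) t) = infsum (\<lambda>k. f' k t) U"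
    using conv[of f' t] B1 S(3) by auto
  ultimately show ?thesis
    using DERIV_cong_ev[of t t "\<lambda>x. \<Sum>n. f (e n) x" "\<lambda>s. infsum (\<lambda>k. f k s) U"] by blast
qed



lemma d0:
  fixes A B t :: real
  assumes "A + B * t^2 \<noteq> 0"
  shows "((\<lambda>t. t^3 / (A + B * t^2)^3) has_real_derivative
          (3 * t^2 / (A + B * t^2)^3 - 6 * B * t^4 / (A + B * t^2)^4)) (at t)"
proof -
  have "((\<lambda>t. t^3 / (A + B * t^2)^3) has_real_derivative
     ((3 * t^2) * (A + B * t^2)^3 - t^3 * (3 * (A + B * t^2)^2 * (B * (2 * t)))) / ((A + B * t^2)^3 * (A + B * t^2)^3)) (at t)"
    using assms
    by (intro derivative_eq_intros DERIV_quotient) (auto intro!: derivative_eq_intros)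
  moreover have "((3 * t^2) * (A + B * t^2)^3 - t^3 * (3 * (A + B * t^2)^2 * (B * (2 * t)))) / ((A + B * t^2)^3 * (A + B * t^2)^3)
     = 3 * t^2 / (A + B * t^2)^3 - 6 * B * t^4 / (A + B * t^2)^4"
    using assms by (simp add: field_simps) (simp add: algebra_simps power2_eq_square power3_eq_cube numeral_eq_Suc)
  ultimately show ?thesis by simp
qed

lemma d1:
  fixes A B t :: real
  assumes "A + B * t^2 \<noteq> 0"
  shows "((\<lambda>t. 3 * t^2 / (A + B * t^2)^3 - 6 * B * t^4 / (A + B * t^2)^4) has_real_derivative
          (6 * t / (A + B * t^2)^3 - 42 * B * t^3 / (A + B * t^2)^4 + 48 * B^2 * t^5 / (A + B * t^2)^5)) (at t)"
proof -
  have "((\<lambda>t. 3 * t^2 / (A + B * t^2)^3 - 6 * B * t^4 / (A + B * t^2)^4) has_real_derivative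
     ((3 * (2 * t)) * (A + B * t^2)^3 - 3 * t^2 * (3 * (A + B * t^2)^2 * (B * (2 * t)))) / ((A + B * t^2)^3 * (A + B * t^2)^3)
   - ((6 * B * (4 * t^3)) * (A + B * t^2)^4 - 6 * B * t^4 * (4 * (A + B * t^2)^3 * (B * (2 * t)))) / ((A + B * t^2)^4 * (A + B * t^2)^4)) (at t)"
    using assms
    by (intro derivative_eq_intros DERIV_quotient) (auto intro!: derivative_eq_intros)
  moreover have "((3 * (2 * t)) * (A + B * t^2)^3 - 3 * t^2 * (3 * (A + B * t^2)^2 * (B * (2 * t)))) / ((A + B * t^2)^3 * (A + B * t^2)^3)
   - ((6 * B * (4 * t^3)) * (A + B * t^2)^4 - 6 * B * t^4 * (4 * (A + B * t^2)^3 * (B * (2 * t)))) / ((A + B * t^2)^4 * (A + B * t^2)^4)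
     = 6 * t / (A + B * t^2)^3 - 42 * B * t^3 / (A + B * t^2)^4 + 48 * B^2 * t^5 / (A + B * t^2)^5"
    using assms by (simp add: field_simps) (simp add: algebra_simps power2_eq_square power3_eq_cube numeral_eq_Suc)
  ultimately show ?thesis by simp
qed



lemma uu_pos:
  fixes x t :: real and m n :: int
  assumes "t > 0" "(m, n) \<noteq> (0, 0)"
  shows "(of_int m * x + of_int n)^2 + (of_int m)^2 * t^2 > 0"
proof (cases "m = 0")
  case True
  then have "n \<noteq> 0" using assms by auto
  then show ?thesis using True by simp
next
  case False
  then have "(of_int m)^2 * t^2 > (0::real)" using assms by simp
  then show ?thesis by (smt (verit) zero_le_power2)
qed

lemma eps_eq:
  fixes x t :: real
  assumes t: "t > 0"
  shows "epstein_zeta 3 (Complex x t) =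
    (\<Sum>\<^sub>\<infinity>(m,n)\<in>(UNIV :: (int \<times> int) set) - {(0,0)}.
        t^3 / ((of_int m * x + of_int n)^2 + (of_int m)^2 * t^2)^3)"
  unfolding epstein_zeta_def
proof (rule infsum_cong)
  fix p :: "int \<times> int" assume p: "p \<in> UNIV - {(0,0)}"
  obtain m n where pmn: "p = (m, n)" by (cases p)
  define q where "q = (of_int m * x + of_int n)^2 + (of_int m)^2 * t^2"
  have qpos: "q > 0" unfolding q_def using uu_pos[OF t, of m n x] p pmn by auto
  have c: "of_int m * Complex x t + of_int n = Complex (of_int m * x + of_int n) (of_int m * t)"
    by (simp add: complex_eq_iff)
  have "cmod (of_int m * Complex x t + of_int n) = sqrt q"
    unfolding c q_def by (simp add: complex_norm power_mult_distrib)
  moreover have "sqrt q powr (2 * 3) = q^3"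
  proof -
    have "sqrt q powr (2 * 3) = sqrt q ^ 6" using qpos
      by (subst powr_realpow[symmetric]) auto
    also have "\<dots> = (sqrt q ^ 2)^3" by (simp add: power_mult[symmetric])
    also have "\<dots> = q^3" using qpos by simp
    finally show ?thesis .
  qed
  moreover have "t powr 3 = t^3" using t by (subst powr_realpow[symmetric]) auto
  ultimately show "(case p of (m, n) \<Rightarrow> Im (Complex x t) powr 3 / cmod (of_int m * Complex x t + of_int n) powr (2 * 3)) =
         (case p of (m, n) \<Rightarrow> t ^ 3 / ((of_int m * x + of_int n)^2 + (of_int m)^2 * t^2)^3)"
    using pmn q_def by simp
qed



lemma bnd:
  fixes A B a b t :: real
  assumes A: "0 \<le> A" and B: "0 \<le> B" and a: "0 < a" "a \<le> t" and b: "t \<le> b"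
      and qa: "0 < A + B * a^2"
  defines "w \<equiv> A + B * t^2"
  defines "K \<equiv> 96 * (b^3 + b^2 + b) / (A + B * a^2)^3"
  shows "\<bar>t^3 / w^3\<bar> \<le> K"
    and "\<bar>3 * t^2 / w^3 - 6 * B * t^4 / w^4\<bar> \<le> K"
    and "\<bar>6 * t / w^3 - 42 * B * t^3 / w^4 + 48 * B^2 * t^5 / w^5\<bar> \<le> K"
proof -
  have t0: "t > 0" using a by simp
  have b0: "b > 0" using a b by simp
  have wq: "A + B * a^2 \<le> w" unfolding w_def using B a
    by (intro add_left_mono mult_left_mono power_mono) auto
  have w0: "w > 0" using wq qa by simp
  define Q where "Q = 1 / (A + B * a^2)^3"
  have PQ: "1 / w^3 \<le> Q" unfolding Q_def using wq qa
    by (intro divide_left_mono power_mono mult_pos_pos zero_less_power) auto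
  have Q0: "Q \<ge> 0" unfolding Q_def using qa by simp
  have KQ: "K = 96 * (b^3 + b^2 + b) * Q" unfolding K_def Q_def by simp
  define r where "r = B * t^2 / w"
  have r0: "0 \<le> r" unfolding r_def using B w0 by simp
  have r1: "r \<le> 1" unfolding r_def using w0 A by (simp add: w_def divide_simps)
  have tb: "t^3 \<le> b^3" "t^2 \<le> b^2" using t0 b by (auto intro!: power_mono)
  have b23: "0 \<le> b^2" "0 \<le> b^3" using b0 by auto
  show "\<bar>t^3 / w^3\<bar> \<le> K"
  proof -
    have "\<bar>t^3 / w^3\<bar> = t^3 * (1 / w^3)" using t0 w0 by simp
    also have "\<dots> \<le> b^3 * Q" using tb PQ t0 w0 b0 by (intro mult_mono) auto
    also have "\<dots> \<le> K" unfolding KQ using Q0 b0 by (intro mult_right_mono) auto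
    finally show ?thesis .
  qed
  show "\<bar>3 * t^2 / w^3 - 6 * B * t^4 / w^4\<bar> \<le> K"
  proof -
    have e: "3 * t^2 / w^3 - 6 * B * t^4 / w^4 = t^2 * (1 / w^3) * (3 - 6 * r)"
      unfolding r_def using w0 by (simp add: field_simps power_numeral_reduce)
    have "\<bar>3 - 6 * r\<bar> \<le> 9" using r0 r1 by simp
    then have "\<bar>t^2 * (1 / w^3) * (3 - 6 * r)\<bar> \<le> b^2 * Q * 9"
      unfolding abs_mult using tb PQ t0 w0 Q0 by (intro mult_mono) auto
    also have "\<dots> \<le> K"
    proof -
      have "b^2 * 9 \<le> 96 * (b^3 + b^2 + b)" unfolding distrib_left using b23 b0 by linarith
      from mult_right_mono[OF this Q0] show ?thesis unfolding KQ by (simp add: mult_ac)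
    qed
    finally show ?thesis using e by simp
  qed
  show "\<bar>6 * t / w^3 - 42 * B * t^3 / w^4 + 48 * B^2 * t^5 / w^5\<bar> \<le> K"
  proof -
    have e: "6 * t / w^3 - 42 * B * t^3 / w^4 + 48 * B^2 * t^5 / w^5 = t * (1 / w^3) * (6 - 42 * r + 48 * r^2)"
      unfolding r_def using w0 by (simp add: field_simps power_numeral_reduce)
    have "r^2 \<le> 1" "0 \<le> r^2" using r0 r1 by (simp_all add: power_le_one)
    then have "\<bar>6 - 42 * r + 48 * r^2\<bar> \<le> 96" unfolding abs_le_iff using r0 r1 by linarith
    then have "\<bar>t * (1 / w^3) * (6 - 42 * r + 48 * r^2)\<bar> \<le> b * Q * 96"
      unfolding abs_mult using b PQ t0 w0 Q0 by (intro mult_mono) auto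
    also have "\<dots> \<le> K"
    proof -
      have "b * 96 \<le> 96 * (b^3 + b^2 + b)" unfolding distrib_left using b23 b0 by linarith
      from mult_right_mono[OF this Q0] show ?thesis unfolding KQ by (simp add: mult_ac)
    qed
    finally show ?thesis using e by simp
  qed
qed



lemma tangent5:
  fixes v p :: real
  assumes "0 \<le> v" "0 \<le> p"
  shows "5 * p^4 * v - 4 * p^5 \<le> v^5"
proof -
  have "v^5 - (5 * p^4 * v - 4 * p^5) = (v - p)^2 * (v^3 + 2 * p * v^2 + 3 * p^2 * v + 4 * p^3)"
    by algebra
  moreover have "0 \<le> (v - p)^2 * (v^3 + 2 * p * v^2 + 3 * p^2 * v + 4 * p^3)"
    using assms by (intro mult_nonneg_nonneg add_nonneg_nonneg) auto
  ultimately show ?thesis by linarith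
qed

lemma poly1:
  fixes v :: real
  assumes "0 \<le> v"
  shows "0 \<le> v^2 - 7 * v + 8 + (147/2000) * v^5"
proof -
  have t0: "5 * (7/4)^4 * v - 4 * (7/4)^5 \<le> v^5" by (rule tangent5) (use assms in auto)
  have n: "(7/4::real)^4 = 2401/256" "(7/4::real)^5 = 16807/1024" by (simp_all add: power_divide)
  have t: "5 * (2401/256) * v - 4 * (16807/1024) \<le> v^5" using t0 unfolding n .
  have s: "0 \<le> (v - 363853/204800)^2" by simp
  have s': "(v - 363853/204800)^2 = v^2 - 2 * (363853/204800) * v + 132389005609/41943040000"
    by (simp add: power2_diff power_divide)
  show ?thesis using t s s' by linarith
qed

lemma poly2:
  fixes v :: real
  assumes "61/25 \<le> v"
  shows "0 \<le> v^2 - 7 * v + 8 + (37/1000) * v^5"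
proof -
  have t0: "5 * (61/25)^4 * v - 4 * (61/25)^5 \<le> v^5" by (rule tangent5) (use assms in auto)
  have n: "(61/25::real)^4 = 13845841/390625" "(61/25::real)^5 = 844596301/9765625" by (simp_all add: power_divide)
  have t: "5 * (13845841/390625) * v - 4 * (844596301/9765625) \<le> v^5" using t0 unfolding n .
  have s: "0 \<le> (v - 61/25)^2" by simp
  have s': "(v - 61/25)^2 = v^2 - 2 * (61/25) * v + 3721/625"
    by (simp add: power2_diff power_divide)
  show ?thesis using t s s' assms by linarith
qed

lemma poly3:
  fixes v :: real
  assumes "146/25 \<le> v"
  shows "0 \<le> v^2 - 7 * v + 8"
proof -
  have s: "0 \<le> (v - 146/25)^2" by simp
  have s': "(v - 146/25)^2 = v^2 - 2 * (146/25) * v + 21316/625"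
    by (simp add: power2_diff power_divide)
  show ?thesis using s s' assms by linarith
qed

lemma poly4:
  fixes v :: real
  assumes "v \<le> 34/25" "0 \<le> v"
  shows "0 \<le> v^2 - 7 * v + 8"
proof -
  have s: "0 \<le> (34/25 - v) * (141/25 - v)" using assms by (intro mult_nonneg_nonneg) auto
  have s': "(34/25 - v) * (141/25 - v) = v^2 - 7 * v + 4794/625"
    by (simp add: field_simps power2_eq_square)
  show ?thesis using s s' assms by linarith
qed

lemma conv_bound:
  fixes c w y K :: real
  assumes c: "c > 0" and w: "w > 0" and y: "y > 0"
      and P: "0 \<le> (w/c)^2 - 7 * (w/c) + 8 + K * (w/c)^5"
  shows "6 * y / w^5 * (w^2 - 7 * c * w + 8 * c^2) \<ge> - (6 * y / c^3) * K"
proof -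
  define v where "v = w / c"
  have v0: "v > 0" unfolding v_def using c w by simp
  have wv: "w = c * v" unfolding v_def using c by simp
  have "(v^2 - 7 * v + 8) / v^5 \<ge> - K"
    using P v0 unfolding v_def[symmetric] by (simp add: divide_simps)
  then have "(6 * y / c^3) * ((v^2 - 7 * v + 8) / v^5) \<ge> (6 * y / c^3) * (- K)"
    using c y by (intro mult_left_mono) auto
  moreover have "6 * y / w^5 * (w^2 - 7 * c * w + 8 * c^2) = (6 * y / c^3) * ((v^2 - 7 * v + 8) / v^5)"
    unfolding wv using c v0 by (simp add: field_simps power_numeral_reduce)
  ultimately show ?thesis by simp
qed



lemma n0_close:
  fixes s :: real
  shows "\<bar>s + of_int \<lfloor>- s + 1/2\<rfloor>\<bar> \<le> 1/2"
proof -
  have "of_int \<lfloor>- s + 1/2\<rfloor> \<le> - s + 1/2" by (rule of_int_floor_le)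
  moreover have "- s + 1/2 < of_int \<lfloor>- s + 1/2\<rfloor> + 1" by (rule real_of_int_floor_add_one_gt)
  ultimately show ?thesis unfolding abs_le_iff by linarith
qed

lemma count_bound:
  fixes s B :: real
  assumes B: "B \<ge> 1/2"
  defines "S \<equiv> {n::int. n \<noteq> \<lfloor>- s + 1/2\<rfloor> \<and> \<bar>s + of_int n\<bar> < B}"
  shows "finite S" "real (card S) \<le> 2 * B"
proof -
  define lo where "lo = \<lceil>- s - B\<rceil>"
  define hi where "hi = \<lfloor>- s + B\<rfloor>"
  define n0 where "n0 = \<lfloor>- s + 1/2\<rfloor>"
  have sub: "S \<subseteq> {lo..hi} - {n0}"
  proof
    fix n assume "n \<in> S"
    then have "n \<noteq> n0" "\<bar>s + of_int n\<bar> < B" unfolding S_def n0_def by auto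
    then have "- s - B \<le> of_int n" "of_int n \<le> - s + B" by (auto simp: abs_less_iff)
    then have "lo \<le> n" "n \<le> hi" unfolding lo_def hi_def by (auto simp: ceiling_le_iff le_floor_iff)
    with \<open>n \<noteq> n0\<close> show "n \<in> {lo..hi} - {n0}" by auto
  qed
  have n0in: "n0 \<in> {lo..hi}"
  proof -
    have "\<bar>s + of_int n0\<bar> \<le> 1/2" unfolding n0_def by (rule n0_close)
    then have "- s - B \<le> of_int n0" "of_int n0 \<le> - s + B" using B abs_le_D1 abs_le_D2 by fastforce+
    then show ?thesis unfolding lo_def hi_def by (auto simp: ceiling_le_iff le_floor_iff)
  qed
  show "finite S" using sub by (rule finite_subset) auto
  have "card S \<le> card ({lo..hi} - {n0})" using sub by (intro card_mono) auto
  also have "\<dots> = card {lo..hi} - 1" using n0in by (simp add: card_Diff_singleton)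
  also have "\<dots> = nat (hi - lo + 1) - 1" by simp
  finally have c: "card S \<le> nat (hi - lo + 1) - 1" .
  have "lo \<le> hi" using n0in by simp
  then have "real (nat (hi - lo + 1) - 1) = of_int (hi - lo)" by (simp add: of_nat_diff)
  also have "\<dots> \<le> 2 * B"
  proof -
    have "of_int hi \<le> - s + B" unfolding hi_def by (rule of_int_floor_le)
    moreover have "- s - B \<le> of_int lo" unfolding lo_def by (rule le_of_int_ceiling)
    ultimately show ?thesis by simp
  qed
  finally show "real (card S) \<le> 2 * B" using c by (meson of_nat_le_iff order_trans)
qed

lemma zeta5_nat: "(\<Sum>k\<in>{1..Suc N}. 1 / real k ^ 5) \<le> 17/16 - 1 / (16 * real (Suc N))"
proof (induction N)
  case 0
  then show ?case by simp
next
  case (Suc N)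
  define n where "n = real N"
  have n0: "n \<ge> 0" unfolding n_def by simp
  have "(\<Sum>k\<in>{1..Suc (Suc N)}. 1 / real k ^ 5) = (\<Sum>k\<in>{1..Suc N}. 1 / real k ^ 5) + 1 / (n + 2)^5"
    unfolding n_def by (simp add: add.commute)
  also have "\<dots> \<le> 17/16 - 1 / (16 * (n + 1)) + 1 / (n + 2)^5"
    using Suc.IH unfolding n_def by (simp add: add.commute)
  also have "\<dots> \<le> 17/16 - 1 / (16 * (n + 2))"
  proof -
    have e4: "(n + 2)^4 = n^4 + 8 * n^3 + 24 * n^2 + 32 * n + 16" by algebra
    have "16 * (n + 1) \<le> (n + 2)^4" unfolding e4 using n0 by (simp add: add_nonneg_nonneg)
    then have "16 * (n + 1) * (n + 2) \<le> (n + 2)^4 * (n + 2)" using n0 by (intro mult_right_mono) auto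
    then have h: "16 * (n + 1) * (n + 2) \<le> (n + 2)^5" by (simp add: power_Suc2[symmetric] del: power_Suc)
    have "1 / (n + 2)^5 \<le> 1 / (16 * (n + 1) * (n + 2))"
      using h n0 by (intro divide_left_mono mult_pos_pos) auto
    also have "\<dots> = 1 / (16 * (n + 1)) - 1 / (16 * (n + 2))"
    proof -
      have "n + 1 \<noteq> 0" "n + 2 \<noteq> 0" using n0 by linarith+
      then show ?thesis by (simp add: divide_simps)
    qed
    finally show ?thesis by simp
  qed
  finally show ?case unfolding n_def by (simp add: add.commute)
qed

lemma zeta5_nat': "(\<Sum>k\<in>{1..N}. 1 / real k ^ 5) \<le> 17/16"
proof (cases N)
  case 0 then show ?thesis by simp
next
  case (Suc M)
  have "(\<Sum>k\<in>{1..N}. 1 / real k ^ 5) \<le> 17/16 - 1 / (16 * real (Suc M))" using zeta5_nat Suc by simp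
  also have "\<dots> \<le> 17/16" by simp
  finally show ?thesis .
qed

lemma zeta5_int:
  assumes "finite F" "0 \<notin> F"
  shows "(\<Sum>m\<in>F. 1 / \<bar>real_of_int m\<bar> ^ 5) \<le> 17/8"
proof -
  define N where "N = Max (nat ` abs ` F)"
  have bnd: "nat \<bar>m\<bar> \<le> N" if "m \<in> F" for m
    unfolding N_def using assms(1) that by (intro Max_ge) auto
  define P where "P = {m\<in>F. m > 0}"
  define Q where "Q = {m\<in>F. m < 0}"
  have pm: "m > 0 \<or> m < 0" if "m \<in> F" for m using assms(2) that by (metis linorder_neqE)
  have FPQ: "F = P \<union> Q" "P \<inter> Q = {}" unfolding P_def Q_def using pm by auto
  have fP: "finite P" "finite Q" unfolding P_def Q_def using assms(1) by auto
  let ?f = "\<lambda>m::int. 1 / \<bar>real_of_int m\<bar> ^ 5"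
  have f0: "?f m \<ge> 0" for m by simp
  have "sum ?f P \<le> sum ?f (int ` {1..N})"
  proof (rule sum_mono2)
    show "P \<subseteq> int ` {1..N}"
    proof
      fix m assume "m \<in> P"
      then have "m > 0" "nat m \<le> N" using bnd unfolding P_def by force+
      then show "m \<in> int ` {1..N}" by (intro image_eqI[of _ _ "nat m"]) auto
    qed
  qed (auto simp: f0)
  also have "\<dots> = (\<Sum>k\<in>{1..N}. 1 / real k ^ 5)" by (subst sum.reindex) (auto simp: inj_on_def)
  also have "\<dots> \<le> 17/16" by (rule zeta5_nat')
  finally have sP: "sum ?f P \<le> 17/16" .
  have "sum ?f Q \<le> sum ?f ((\<lambda>k. - int k) ` {1..N})"
  proof (rule sum_mono2)
    show "Q \<subseteq> (\<lambda>k. - int k) ` {1..N}"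
    proof
      fix m assume "m \<in> Q"
      then have "m < 0" "nat (- m) \<le> N" using bnd unfolding Q_def by force+
      then show "m \<in> (\<lambda>k. - int k) ` {1..N}" by (intro image_eqI[of _ _ "nat (- m)"]) auto
    qed
  qed (auto simp: f0)
  also have "\<dots> = (\<Sum>k\<in>{1..N}. 1 / real k ^ 5)" by (subst sum.reindex) (auto simp: inj_on_def)
  also have "\<dots> \<le> 17/16" by (rule zeta5_nat')
  finally have sQ: "sum ?f Q \<le> 17/16" .
  have "sum ?f F = sum ?f P + sum ?f Q" using FPQ fP by (simp add: sum.union_disjoint)
  then show ?thesis using sP sQ by simp
qed



definition G2 :: "real \<Rightarrow> real \<Rightarrow> int \<Rightarrow> int \<Rightarrow> real" where
  "G2 x y m n = 6 * y / ((of_int m * x + of_int n)^2 + (of_int m)^2 * y^2)^3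
      - 42 * (of_int m)^2 * y^3 / ((of_int m * x + of_int n)^2 + (of_int m)^2 * y^2)^4
      + 48 * ((of_int m)^2)^2 * y^5 / ((of_int m * x + of_int n)^2 + (of_int m)^2 * y^2)^5"

definition Sb :: "real \<Rightarrow> real \<Rightarrow> real \<Rightarrow> int \<Rightarrow> int set" where
  "Sb x y b m = {n. n \<noteq> \<lfloor>- (of_int m * x) + 1/2\<rfloor> \<and> \<bar>of_int m * x + of_int n\<bar> < b * \<bar>of_int m\<bar> * y}"

definition Lb :: "real \<Rightarrow> real \<Rightarrow> int \<Rightarrow> int \<Rightarrow> real" where
  "Lb x y m n = 6 * y / ((of_int m)^2 * y^2)^3 *
     ((if n \<in> Sb x y (11/5) m then 37/1000 else 0) + (if n \<in> Sb x y (6/5) m then 73/2000 else 0))"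

lemma Sb_mono: "y > 0 \<Longrightarrow> Sb x y (6/5) m \<subseteq> Sb x y (11/5) m"
  unfolding Sb_def by (auto elim!: order.strict_trans2 intro!: mult_right_mono)

lemma sq_ge_of_abs:
  fixes s r :: real
  assumes "0 \<le> r" "r \<le> \<bar>s\<bar>"
  shows "r^2 \<le> s^2"
  using power_mono[OF assms(2) assms(1), of 2] by simp

lemma G2_lower:
  fixes x y :: real and m n :: int
  assumes y: "y > 0" "y^2 \<ge> 3/4" and m: "m \<noteq> 0"
  shows "G2 x y m n \<ge> - Lb x y m n"
proof -
  define a where "a = (of_int m * x + of_int n)^2"
  define c where "c = (of_int m)^2 * y^2"
  define w where "w = a + c"
  define k where "k = 6 * y / c^3"
  have m1: "(of_int m)^2 \<ge> (1::real)" using m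
    by (metis of_int_1_le_iff of_int_power zero_less_power2 int_one_le_iff_zero_less)
  have c34: "c \<ge> 3/4" unfolding c_def using m1 y
    by (metis mult_mono' mult_1 order_trans zero_le_one zero_le_power2 le_numeral_extra(1) order.refl)
  have c0: "c > 0" using c34 by simp
  have a0: "a \<ge> 0" unfolding a_def by simp
  have w0: "w > 0" unfolding w_def using a0 c0 by simp
  have e1: "42 * (of_int m)^2 * y^3 = 42 * c * y" unfolding c_def by algebra
  have e2: "48 * ((of_int m)^2)^2 * y^5 = 48 * c^2 * y" unfolding c_def by algebra
  have "G2 x y m n = 6 * y / w^3 - 42 * c * y / w^4 + 48 * c^2 * y / w^5"
    unfolding G2_def e1 e2 by (simp add: w_def a_def c_def)
  also have "\<dots> = 6 * y / w^5 * (w^2 - 7 * c * w + 8 * c^2)"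
    using w0 by (simp add: field_simps power_numeral_reduce)
  finally have G2e: "G2 x y m n = 6 * y / w^5 * (w^2 - 7 * c * w + 8 * c^2)" .
  have vdef: "w / c = 1 + a / c" unfolding w_def using c0 by (simp add: field_simps)
  have Lform: "Lb x y m n = k * ((if n \<in> Sb x y (11/5) m then 37/1000 else 0) + (if n \<in> Sb x y (6/5) m then 73/2000 else 0))"
    unfolding Lb_def k_def c_def by simp
  define n0 where "n0 = \<lfloor>- (of_int m * x) + 1/2\<rfloor>"
  have abs_m: "\<bar>real_of_int m\<bar> \<ge> 1" using m by linarith
  have far: "a \<ge> b^2 * c" if "n \<noteq> n0" "n \<notin> Sb x y b m" "b \<ge> 0" for b
  proof -
    have "b * \<bar>of_int m\<bar> * y \<le> \<bar>of_int m * x + of_int n\<bar>" using that unfolding Sb_def n0_def by auto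
    then have "(b * \<bar>of_int m\<bar> * y)^2 \<le> (of_int m * x + of_int n)^2"
      using that y by (intro sq_ge_of_abs) auto
    then show ?thesis unfolding a_def c_def by (simp add: power_mult_distrib mult_ac)
  qed
  show ?thesis
  proof (cases "n = n0")
    case True
    then have nS: "n \<notin> Sb x y (11/5) m" "n \<notin> Sb x y (6/5) m" unfolding Sb_def n0_def by auto
    have "\<bar>of_int m * x + of_int n\<bar> \<le> 1/2" unfolding True n0_def by (rule n0_close)
    then have "a \<le> (1/2)^2" unfolding a_def by (metis abs_ge_zero power_mono power2_abs)
    then have "a / c \<le> 1/3" using c34 c0 by (simp add: divide_simps)
    then have "w / c \<le> 34/25" using vdef by simp
    then have "0 \<le> (w/c)^2 - 7 * (w/c) + 8 + 0 * (w/c)^5" using poly4[of "w/c"] w0 c0 by simp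
    from conv_bound[OF c0 w0 y(1) this] show ?thesis using G2e Lform nS by simp
  next
    case False
    show ?thesis
    proof (cases "n \<in> Sb x y (6/5) m")
      case True
      then have "n \<in> Sb x y (11/5) m" using Sb_mono[OF y(1)] by auto
      have "0 \<le> (w/c)^2 - 7 * (w/c) + 8 + (147/2000) * (w/c)^5" using poly1[of "w/c"] w0 c0 by simp
      from conv_bound[OF c0 w0 y(1) this] show ?thesis using G2e Lform True \<open>n \<in> Sb x y (11/5) m\<close>
        unfolding k_def by simp
    next
      case nS2: False
      show ?thesis
      proof (cases "n \<in> Sb x y (11/5) m")
        case True
        have "a \<ge> (6/5)^2 * c" by (rule far[OF False nS2]) simp
        then have "a / c \<ge> 36/25" using c0 by (simp add: divide_simps power_divide)
        then have "w / c \<ge> 61/25" using vdef by simp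
        then have "0 \<le> (w/c)^2 - 7 * (w/c) + 8 + (37/1000) * (w/c)^5" using poly2[of "w/c"] by simp
        from conv_bound[OF c0 w0 y(1) this] show ?thesis using G2e Lform True nS2
          unfolding k_def by simp
      next
        case nS1: False
        have "a \<ge> (11/5)^2 * c" by (rule far[OF False nS1]) simp
        then have "a / c \<ge> 121/25" using c0 by (simp add: divide_simps power_divide)
        then have "w / c \<ge> 146/25" using vdef by simp
        then have "0 \<le> (w/c)^2 - 7 * (w/c) + 8 + 0 * (w/c)^5" using poly3[of "w/c"] by simp
        from conv_bound[OF c0 w0 y(1) this] show ?thesis using G2e Lform nS1 nS2 by simp
      qed
    qed
  qed
qed

lemma y_half: "y > 0 \<Longrightarrow> y^2 \<ge> 3/4 \<Longrightarrow> y \<ge> (1/2::real)"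
  by (rule power2_le_imp_le) (auto simp: power_divide)

lemma Sb_count:
  assumes y: "y > 0" "y^2 \<ge> 3/4" and m: "m \<noteq> 0" and b: "b \<ge> 1"
  shows "finite (Sb x y b m)" "real (card (Sb x y b m)) \<le> 2 * (b * \<bar>of_int m\<bar> * y)"
proof -
  have abs_m: "\<bar>real_of_int m\<bar> \<ge> 1" using m by linarith
  have "1/2 \<le> y" using y_half[OF y] .
  also have "\<dots> \<le> b * \<bar>of_int m\<bar> * y" using abs_m b y(1)
    by (metis mult_le_cancel_right1 mult_mono' order_trans zero_le_one abs_ge_zero less_le mult_1)
  finally have B: "b * \<bar>of_int m\<bar> * y \<ge> 1/2" .
  have eq: "Sb x y b m = {n::int. n \<noteq> \<lfloor>- (of_int m * x) + 1/2\<rfloor> \<and> \<bar>of_int m * x + of_int n\<bar> < b * \<bar>of_int m\<bar> * y}"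
    unfolding Sb_def ..
  show "finite (Sb x y b m)" unfolding eq by (rule count_bound(1)[OF B])
  show "real (card (Sb x y b m)) \<le> 2 * (b * \<bar>of_int m\<bar> * y)" unfolding eq by (rule count_bound(2)[OF B])
qed

lemma inner_bound:
  assumes y: "y > 0" "y^2 \<ge> 3/4" and m: "m \<noteq> 0"
  shows "(\<Sum>n\<in>Sb x y (11/5) m. Lb x y m n)
           \<le> 12 * (37/1000 * (11/5) + 73/2000 * (6/5)) / (\<bar>real_of_int m\<bar>^5 * y^4)"
proof -
  define S1 where "S1 = Sb x y (11/5) m"
  define S2 where "S2 = Sb x y (6/5) m"
  define k where "k = 6 * y / ((of_int m)^2 * y^2)^3"
  define M where "M = \<bar>real_of_int m\<bar>"
  have M1: "M \<ge> 1" unfolding M_def using m by linarith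
  have k0: "k \<ge> 0" unfolding k_def using y by simp
  have f1: "finite S1" unfolding S1_def by (rule Sb_count(1)[OF y m]) simp
  have f2: "finite S2" unfolding S2_def by (rule Sb_count(1)[OF y m]) simp
  have c1: "real (card S1) \<le> 2 * ((11/5) * M * y)" unfolding S1_def M_def by (rule Sb_count(2)[OF y m]) simp
  have c2: "real (card S2) \<le> 2 * ((6/5) * M * y)" unfolding S2_def M_def by (rule Sb_count(2)[OF y m]) simp
  have sub: "S2 \<subseteq> S1" unfolding S1_def S2_def by (rule Sb_mono[OF y(1)])
  have "(\<Sum>n\<in>S1. Lb x y m n) = (\<Sum>n\<in>S1. k * 37/1000 + (if n \<in> S2 then k * 73/2000 else 0))"
    by (rule sum.cong) (auto simp: Lb_def k_def S1_def S2_def)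
  also have "\<dots> = k * 37/1000 * card S1 + (\<Sum>n\<in>S1. if n \<in> S2 then k * 73/2000 else 0)"
    by (simp add: sum.distrib)
  also have "(\<Sum>n\<in>S1. if n \<in> S2 then k * 73/2000 else 0) = (\<Sum>n\<in>{n\<in>S1. n \<in> S2}. k * 73/2000)"
    by (rule sum.inter_filter[OF f1, symmetric])
  also have "{n\<in>S1. n \<in> S2} = S2" using sub by auto
  finally have e: "(\<Sum>n\<in>S1. Lb x y m n) = k * (37/1000 * card S1 + 73/2000 * card S2)"
    by (simp add: algebra_simps)
  have "37/1000 * card S1 + 73/2000 * card S2 \<le> 37/1000 * (2 * ((11/5) * M * y)) + 73/2000 * (2 * ((6/5) * M * y))"
    using c1 c2 by linarith
  then have "k * (37/1000 * card S1 + 73/2000 * card S2) \<le> k * (37/1000 * (2 * ((11/5) * M * y)) + 73/2000 * (2 * ((6/5) * M * y)))"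
    using k0 by (rule mult_left_mono)
  also have "\<dots> = 12 * (37/1000 * (11/5) + 73/2000 * (6/5)) / (M^5 * y^4)"
  proof -
    have "(of_int m)^2 = M^2" unfolding M_def by simp
    then have "k = 6 * y / (M^2 * y^2)^3" unfolding k_def by simp
    then show ?thesis using M1 y(1) by (simp add: field_simps power_numeral_reduce)
  qed
  finally show ?thesis using e unfolding S1_def M_def by simp
qed

lemma Lb_nonneg: "y > 0 \<Longrightarrow> Lb x y m n \<ge> 0"
  unfolding Lb_def by (intro mult_nonneg_nonneg divide_nonneg_nonneg) auto

lemma A1_bound:
  fixes x y :: real
  assumes y: "y > 0" "y^2 \<ge> 3/4"
    and sm: "(\<lambda>(m,n). G2 x y m n) summable_on ((UNIV - {0}) \<times> UNIV)"
  shows "(\<Sum>\<^sub>\<infinity>(m,n)\<in>(UNIV - {0}) \<times> UNIV. G2 x y m n)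
           \<ge> - ((17/8) * (12 * (37/1000 * (11/5) + 73/2000 * (6/5)) / y^4))"
proof -
  define A1 :: "(int \<times> int) set" where "A1 = (UNIV - {0}) \<times> UNIV"
  define C :: real where "C = 12 * (37/1000 * (11/5) + 73/2000 * (6/5))"
  define Bd where "Bd = (17/8) * (C / y^4)"
  define L where "L = (\<lambda>(m,n). Lb x y m n)"
  have L0: "L p \<ge> 0" for p unfolding L_def using Lb_nonneg[OF y(1)] by (cases p) auto
  have fin: "sum L F \<le> Bd" if F: "finite F" "F \<subseteq> A1" for F
  proof -
    define Ms where "Ms = fst ` F"
    have fMs: "finite Ms" unfolding Ms_def using F by simp
    have Ms0: "m \<noteq> 0" if "m \<in> Ms" for m using that F unfolding Ms_def A1_def by auto
    define T where "T = Sigma Ms (\<lambda>m. Sb x y (11/5) m)"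
    have fT: "finite T" unfolding T_def using fMs Ms0 Sb_count(1)[OF y] by (intro finite_SigmaI) auto
    have "sum L F \<le> sum L (F \<union> T)" using F fT L0 by (intro sum_mono2) auto
    also have "\<dots> = sum L T"
    proof (rule sum.mono_neutral_right)
      show "finite (F \<union> T)" using F fT by simp
      show "T \<subseteq> F \<union> T" by simp
      show "\<forall>i\<in>F \<union> T - T. L i = 0"
      proof
        fix p assume p: "p \<in> F \<union> T - T"
        obtain m n where pmn: "p = (m, n)" by (cases p)
        have "m \<in> Ms" using p pmn unfolding Ms_def by force
        then have "n \<notin> Sb x y (11/5) m" using p pmn unfolding T_def by auto
        then have "n \<notin> Sb x y (6/5) m" using Sb_mono[OF y(1)] by auto
        then show "L p = 0" using \<open>n \<notin> Sb x y (11/5) m\<close> unfolding L_def pmn Lb_def by simp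
      qed
    qed
    also have "\<dots> = (\<Sum>m\<in>Ms. \<Sum>n\<in>Sb x y (11/5) m. Lb x y m n)"
      unfolding T_def L_def using fMs Ms0 Sb_count(1)[OF y] by (subst sum.Sigma) auto
    also have "\<dots> \<le> (\<Sum>m\<in>Ms. C / y^4 * (1 / \<bar>real_of_int m\<bar>^5))"
    proof (rule sum_mono)
      fix m assume "m \<in> Ms"
      then have "m \<noteq> 0" by (rule Ms0)
      from inner_bound[OF y this, of x] show "(\<Sum>n\<in>Sb x y (11/5) m. Lb x y m n) \<le> C / y^4 * (1 / \<bar>real_of_int m\<bar>^5)"
        unfolding C_def by (simp add: field_simps)
    qed
    also have "\<dots> = C / y^4 * (\<Sum>m\<in>Ms. 1 / \<bar>real_of_int m\<bar>^5)" by (simp add: sum_distrib_left)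
    also have "\<dots> \<le> C / y^4 * (17/8)"
      using zeta5_int[OF fMs] Ms0 y unfolding C_def by (intro mult_left_mono) auto
    finally show ?thesis unfolding Bd_def by simp
  qed
  have bdd: "bdd_above (sum L ` {F. F \<subseteq> A1 \<and> finite F})" using fin by (intro bdd_aboveI) auto
  have Ls: "L summable_on A1" by (rule nonneg_bdd_above_summable_on) (use L0 bdd in auto)
  have "infsum L A1 \<le> Bd" by (rule infsum_le_finite_sums[OF Ls]) (use fin in auto)
  moreover have "infsum (\<lambda>p. - L p) A1 \<le> (\<Sum>\<^sub>\<infinity>(m,n)\<in>A1. G2 x y m n)"
  proof (rule infsum_mono)
    show "(\<lambda>p. - L p) summable_on A1" using Ls by (simp add: summable_on_uminus)
    show "(\<lambda>(m,n). G2 x y m n) summable_on A1" using sm unfolding A1_def .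
    fix p assume "p \<in> A1"
    then obtain m n where pmn: "p = (m,n)" "m \<noteq> 0" unfolding A1_def by auto
    show "- L p \<le> (case p of (m, n) \<Rightarrow> G2 x y m n)"
      using G2_lower[OF y pmn(2), of x n] unfolding L_def pmn by simp
  qed
  ultimately show ?thesis unfolding A1_def Bd_def C_def infsum_uminus by linarith
qed


theorem lemma4p7:
  fixes x y :: real
  assumes "y \<ge> sqrt 3 / 2"
  shows "deriv (deriv (\<lambda>t. epstein_zeta 3 (Complex x t))) y \<ge> 4"
proof -
  have s3: "sqrt 3 \<ge> (43/25::real)" by (rule real_le_rsqrt) (simp add: power_divide)
  have yb: "y \<ge> 43/50" using assms s3 by linarith
  have y0: "y > 0" using yb by simp
  have y2: "y^2 \<ge> 3/4"
  proof -
    have "(sqrt 3 / 2)^2 \<le> y^2" using assms by (intro power_mono) auto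
    then show ?thesis by (simp add: power_divide)
  qed
  define U :: "(int \<times> int) set" where "U = UNIV - {(0,0)}"
  define f0 :: "int \<times> int \<Rightarrow> real \<Rightarrow> real" where
    "f0 = (\<lambda>p t. case p of (m,n) \<Rightarrow> t^3 / ((of_int m * x + of_int n)^2 + (of_int m)^2 * t^2)^3)"
  define f1 :: "int \<times> int \<Rightarrow> real \<Rightarrow> real" where
    "f1 = (\<lambda>p t. case p of (m,n) \<Rightarrow> 3 * t^2 / ((of_int m * x + of_int n)^2 + (of_int m)^2 * t^2)^3
        - 6 * (of_int m)^2 * t^4 / ((of_int m * x + of_int n)^2 + (of_int m)^2 * t^2)^4)"
  define f2 :: "int \<times> int \<Rightarrow> real \<Rightarrow> real" where
    "f2 = (\<lambda>p t. case p of (m,n) \<Rightarrow> G2 x t m n)"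
  define S :: "real set" where "S = {y/2<..<2*y}"
  have Sopen: "open S" unfolding S_def by simp
  have Sconv: "convex S" unfolding S_def by simp
  have yS: "y \<in> S" unfolding S_def using y0 by simp
  have Spos: "s > 0" if "s \<in> S" for s using that y0 unfolding S_def by simp
  define Kc where "Kc = 96 * ((2*y)^3 + (2*y)^2 + 2*y)"
  define Mj :: "int \<times> int \<Rightarrow> real" where
    "Mj = (\<lambda>p. Kc * (case p of (m,n) \<Rightarrow> 1 / ((of_int m * x + of_int n)^2 + (of_int m)^2 * (y/2)^2)^3))"
  have Mjs: "Mj summable_on U" unfolding Mj_def U_def
    by (rule summable_on_cmult_right[OF maj_summable]) (use y0 in simp)
  have infU: "infinite (UNIV :: (int \<times> int) set)" by (simp add: finite_prod)
  have cU: "countable U" "infinite U" unfolding U_def using infU by auto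
  have bounds: "\<bar>f0 p s\<bar> \<le> Mj p \<and> \<bar>f1 p s\<bar> \<le> Mj p \<and> \<bar>f2 p s\<bar> \<le> Mj p" if p: "p \<in> U" and s: "s \<in> S" for p s
  proof -
    obtain m n where pmn: "p = (m, n)" by (cases p)
    have mn: "(m, n) \<noteq> (0,0)" using p pmn unfolding U_def by simp
    have qa: "0 < (of_int m * x + of_int n)^2 + (of_int m)^2 * (y/2)^2"
      by (rule uu_pos) (use y0 mn in auto)
    have sab: "y/2 \<le> s" "s \<le> 2*y" using s unfolding S_def by auto
    note bb = bnd[of "(of_int m * x + of_int n)^2" "(of_int m)^2" "y/2" s "2*y", OF _ _ _ sab(1) sab(2) qa]
    have K: "96 * ((2*y)^3 + (2*y)^2 + 2*y) / ((of_int m * x + of_int n)^2 + (of_int m)^2 * (y/2)^2)^3 = Mj p"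
      unfolding Mj_def Kc_def pmn by simp
    show ?thesis using bb y0 K unfolding f0_def f1_def f2_def pmn G2_def by simp
  qed
  have der0: "(f0 p has_real_derivative f1 p s) (at s)" if p: "p \<in> U" and s: "s \<in> S" for p s
  proof -
    obtain m n where pmn: "p = (m, n)" by (cases p)
    have mn: "(m, n) \<noteq> (0,0)" using p pmn unfolding U_def by simp
    have "(of_int m * x + of_int n)^2 + (of_int m)^2 * s^2 \<noteq> 0"
      using uu_pos[of s m n x] Spos[OF s] mn by simp
    from d0[OF this] show ?thesis unfolding f0_def f1_def pmn by simp
  qed
  have der1: "(f1 p has_real_derivative f2 p s) (at s)" if p: "p \<in> U" and s: "s \<in> S" for p s
  proof -
    obtain m n where pmn: "p = (m, n)" by (cases p)
    have mn: "(m, n) \<noteq> (0,0)" using p pmn unfolding U_def by simp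
    have "(of_int m * x + of_int n)^2 + (of_int m)^2 * s^2 \<noteq> 0"
      using uu_pos[of s m n x] Spos[OF s] mn by simp
    from d1[OF this] show ?thesis unfolding f1_def f2_def pmn G2_def by simp
  qed
  define F0 where "F0 = (\<lambda>s. infsum (\<lambda>p. f0 p s) U)"
  define F1 where "F1 = (\<lambda>s. infsum (\<lambda>p. f1 p s) U)"
  define F2 where "F2 = (\<lambda>s. infsum (\<lambda>p. f2 p s) U)"
  have D1: "(F0 has_real_derivative F1 s) (at s)" if "s \<in> S" for s
    unfolding F0_def F1_def
    by (rule infsum_has_deriv[OF cU Sopen Sconv that, of f0 f1 Mj]) (use der0 bounds Mjs in auto)
  have D2: "(F1 has_real_derivative F2 s) (at s)" if "s \<in> S" for s
    unfolding F1_def F2_def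
    by (rule infsum_has_deriv[OF cU Sopen Sconv that, of f1 f2 Mj]) (use der1 bounds Mjs in auto)
  define E where "E = (\<lambda>t. epstein_zeta 3 (Complex x t))"
  have EF0: "E t = F0 t" if "t \<in> S" for t
    unfolding E_def F0_def f0_def U_def using eps_eq[OF Spos[OF that], of x] by simp
  have dE: "deriv E s = F1 s" if s: "s \<in> S" for s
  proof -
    have ev: "eventually (\<lambda>t. E t = F0 t) (nhds s)"
      using eventually_nhds_in_open[OF Sopen s] by (rule eventually_mono) (use EF0 in auto)
    have "(E has_real_derivative F1 s) (at s)"
      using D1[OF s] DERIV_cong_ev[OF refl ev refl] by simp
    then show ?thesis by (rule DERIV_imp_deriv)
  qed
  have "deriv (deriv E) y = deriv F1 y"
  proof (rule deriv_cong_ev)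
    show "eventually (\<lambda>t. deriv E t = F1 t) (nhds y)"
      using eventually_nhds_in_open[OF Sopen yS] by (rule eventually_mono) (use dE in auto)
  qed simp
  also have "\<dots> = F2 y" by (rule DERIV_imp_deriv[OF D2[OF yS]])
  finally have main: "deriv (deriv E) y = F2 y" .
  have F2e: "F2 y = (\<Sum>\<^sub>\<infinity>(m,n)\<in>U. G2 x y m n)" unfolding F2_def f2_def by simp
  have smU: "(\<lambda>(m,n). G2 x y m n) summable_on U"
    by (rule real_summable_by_bound[OF Mjs]) (use bounds[OF _ yS] in \<open>auto simp: f2_def\<close>)
  define A0 :: "(int \<times> int) set" where "A0 = {0} \<times> (UNIV - {0})"
  define A1 :: "(int \<times> int) set" where "A1 = (UNIV - {0}) \<times> UNIV"
  have UA: "U = A0 \<union> A1" "A0 \<inter> A1 = {}" unfolding U_def A0_def A1_def by auto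
  have sm0: "(\<lambda>(m,n). G2 x y m n) summable_on A0" using smU
    by (rule summable_on_subset_banach) (auto simp: UA)
  have sm1: "(\<lambda>(m,n). G2 x y m n) summable_on A1" using smU
    by (rule summable_on_subset_banach) (auto simp: UA)
  have split: "(\<Sum>\<^sub>\<infinity>(m,n)\<in>U. G2 x y m n) = (\<Sum>\<^sub>\<infinity>(m,n)\<in>A0. G2 x y m n) + (\<Sum>\<^sub>\<infinity>(m,n)\<in>A1. G2 x y m n)"
    unfolding UA(1) by (rule infsum_Un_disjoint[OF sm0 sm1 UA(2)])
  have part0: "(\<Sum>\<^sub>\<infinity>(m,n)\<in>A0. G2 x y m n) \<ge> 12 * y"
  proof -
    have G0: "G2 x y 0 n = 6 * y / ((of_int n)^2)^3" for n unfolding G2_def by simp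
    have "sum (\<lambda>(m,n). G2 x y m n) {(0,1),(0,-1)} \<le> (\<Sum>\<^sub>\<infinity>(m,n)\<in>A0. G2 x y m n)"
      by (rule finite_sum_le_infsum[OF sm0]) (auto simp: A0_def G0 y0 less_imp_le)
    moreover have "sum (\<lambda>(m,n). G2 x y m n) {(0,1),(0,-1)} = 12 * y" by (simp add: G0)
    ultimately show ?thesis by simp
  qed
  have part1: "(\<Sum>\<^sub>\<infinity>(m,n)\<in>A1. G2 x y m n) \<ge> - ((17/8) * (12 * (37/1000 * (11/5) + 73/2000 * (6/5)) / y^4))"
    using A1_bound[OF y0 y2, of x] sm1 unfolding A1_def by simp
  have fin: "12 * y - (17/8) * (12 * (37/1000 * (11/5) + 73/2000 * (6/5)) / y^4) \<ge> 4"
  proof -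
    have y4: "y^4 \<ge> 9/16"
    proof -
      have "(3/4)^2 \<le> (y^2)^2" using y2 by (intro power_mono) auto
      then show ?thesis by (simp add: power_divide power_mult[symmetric])
    qed
    have "(17/8) * (12 * (37/1000 * (11/5) + 73/2000 * (6/5)) / y^4) \<le> (17/8) * (12 * (37/1000 * (11/5) + 73/2000 * (6/5)) / (9/16))"
      using y4 by (intro mult_left_mono divide_left_mono) auto
    then show ?thesis using yb by simp
  qed
  show ?thesis using main F2e split part0 part1 fin unfolding E_def by linarith
qed

end
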